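(* Let $\mathcal{R}=\{z\in\mathbb{C}:\Re(z)>0\}$ and let $\Phi:\mathcal{R}\to\mathbb{C}$ be analytic and satisfy: (a) for all $0<a<b<\infty$, $\lim_{y\to\pm\infty} e^{-\pi|y|}\int_a^b\left|\frac{\Phi(x+iy)}{x+iy}\right|\mathrm{d}x=0$; (b) for every $\eta>0$, $\sup_{x\ge\eta}\int_{-\infty}^\infty\left|\frac{\Phi(x+iy)}{x+iy}\right|e^{-\pi|y|}\,\mathrm{d}y<\infty$; (c) $\lim_{x\to\infty}\int_{-\infty}^\infty\left|\frac{\Phi(x+iy)}{x+iy}\right|e^{-\pi|y|}\,\mathrm{d}y=0$. Let $\delta>0$. Then there exists $c(\delta,\Phi)>0$, depending only on $\delta$ and $\Phi$, such that $|\Phi(z)|\le c(\delta,\Phi)|z|e^{\pi|y|}$ for all $z=x+iy$ with $\Re(z)\ge\delta$. *)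

theory Defs
  imports "HOL-Analysis.Analysis"
begin

end

theory Submission
  imports Defs "HOL-Complex_Analysis.Complex_Analysis"
begin

lemma has_contour_integral_linepath_same_Im_iff:
  assumes "Im z = c" "Im z' = c" "Re z = a" "Re z' = b" "a < b"
  shows   "(f has_contour_integral I) (linepath z z') \<longleftrightarrow>
             ((\<lambda>x. f (Complex x c)) has_integral I) {a..b}"
proof -
  have "(f has_contour_integral I) (linepath z z') \<longleftrightarrow>
          ((\<lambda>x. f (linepath z z' x) * (z' - z)) has_integral I) {0..1}"
    by (subst has_contour_integral_linepath) simp_all
  also have "\<dots> \<longleftrightarrow> ((\<lambda>x. f (Complex (a + (b - a) * x) c) * of_real (b - a)) has_integral I) {0..1}"
    using assms
    by (intro has_integral_cong arg_cong2[of _ _ _ _ "(*)"] arg_cong[of _ _ f])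
       (auto simp: linepath_def complex_eq_iff algebra_simps)
  also have "{0..1} = (\<lambda>x. x / (b - a)) ` {0..b-a}"
    using assms by simp
  also have "((\<lambda>x. f (Complex (a + (b - a) * x) c) * of_real (b - a)) has_integral I) \<dots> \<longleftrightarrow>
             ((\<lambda>x. f (Complex (a + x) c) * of_real (b - a)) has_integral ((b-a) *\<^sub>R I)) {0..b-a}"
    by (subst has_integral_stretch_real_iff) (use assms in simp_all)
  also have "\<dots> \<longleftrightarrow> ((\<lambda>x. of_real (b-a) * (f (Complex x c))) has_integral (b-a) *\<^sub>R I) {a..b}"
    by (subst has_integral_shift_real_ivl_iff[where c = "-a"])
       (simp_all add: scaleR_conv_of_real mult_ac)
  also have "\<dots> \<longleftrightarrow> ((\<lambda>x. f (Complex x c)) has_integral I) {a..b}"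
    by (subst has_integral_mult_right_iff) (use assms in \<open>auto simp: scaleR_conv_of_real\<close>)
  finally show ?thesis .
qed

lemma norm_le_nn_integral:
  fixes g :: "real \<Rightarrow> complex"
  assumes "(g has_integral J) {a..b}" "continuous_on {a..b} g"
  shows "ennreal (norm J) \<le> (\<integral>\<^sup>+ x\<in>{a..b}. ennreal (norm (g x)) \<partial>lborel)"
proof -
  have int: "(\<lambda>x. norm (g x)) integrable_on {a..b}"
    by (intro integrable_continuous_interval continuous_on_norm assms)
  have "norm J \<le> integral {a..b} (\<lambda>x. norm (g x))"
    using integral_norm_bound_integral[OF integrable_continuous_interval[OF assms(2)] int] assms(1)
    by (simp add: integral_unique)
  moreover have "(\<integral>\<^sup>+ x\<in>{a..b}. ennreal (norm (g x)) \<partial>lborel) = ennreal (integral {a..b} (\<lambda>x. norm (g x)))"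
    by (rule nn_integral_has_integral_lebesgue'[OF _ integrable_integral[OF int]]) simp
  ultimately show ?thesis by (simp add: ennreal_leI)
qed


lemma exp_sq_bound:
  fixes s y :: real
  shows "exp (-((s-y)^2)) \<le> exp (pi^2/4 + pi*\<bar>y\<bar>) * exp (- pi * \<bar>s\<bar>)"
proof -
  have sq: "(t - pi/2)^2 = t^2 - pi*t + pi^2/4" for t :: real
    by (simp add: power2_eq_square algebra_simps)
  have "0 \<le> (\<bar>s-y\<bar> - pi/2)^2" by simp
  hence "0 \<le> \<bar>s-y\<bar>^2 - pi*\<bar>s-y\<bar> + pi^2/4" by (simp only: sq)
  hence "-((s-y)^2) \<le> pi^2/4 - pi*\<bar>s-y\<bar>" by simp
  moreover have "\<bar>s\<bar> \<le> \<bar>y\<bar> + \<bar>s-y\<bar>" by linarith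
  hence "pi*\<bar>s\<bar> \<le> pi*\<bar>y\<bar> + pi*\<bar>s-y\<bar>" by (simp add: distrib_left[symmetric] pi_gt_zero)
  ultimately have "-((s-y)^2) \<le> (pi^2/4 + pi*\<bar>y\<bar>) + (- pi * \<bar>s\<bar>)" by linarith
  thus ?thesis by (simp add: exp_add[symmetric])
qed

lemma re_sq: "Re ((Complex a b)^2) = a^2 - b^2"
  by (simp add: power2_eq_square)

lemma norm_exp_sq: "norm (exp ((Complex a b)^2)) = exp (a^2 - b^2)"
  by (simp add: power2_eq_square)

lemma hbound:
  fixes F :: "complex \<Rightarrow> complex"
  assumes "\<bar>s - x\<bar> \<le> r" "\<bar>Y - y\<bar> = T" "T \<ge> 1"
  shows "norm (F (Complex s Y) * exp ((Complex s Y - Complex x y)^2) / (Complex s Y - Complex x y))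
     \<le> exp (r^2 + pi^2/4 + pi*\<bar>y\<bar>) * exp (-pi*\<bar>Y\<bar>) * norm (F (Complex s Y))"
proof -
  have d: "Complex s Y - Complex x y = Complex (s-x) (Y-y)" by (simp add: complex_eq_iff)
  have n1: "norm (Complex (s-x) (Y-y)) \<ge> 1"
    using abs_Im_le_cmod[of "Complex (s-x) (Y-y)"] assms by simp
  have "\<bar>s-x\<bar> \<le> \<bar>r\<bar>" using assms by linarith
  hence "(s-x)^2 \<le> r^2" by (simp only: abs_le_square_iff)
  hence e1: "exp ((s-x)^2 - (Y-y)^2) \<le> exp (r^2) * exp (-((Y-y)^2))"
    by (simp add: exp_add[symmetric])
  also have "\<dots> \<le> exp (r^2) * (exp (pi^2/4 + pi*\<bar>y\<bar>) * exp (- pi * \<bar>Y\<bar>))"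
    by (intro mult_left_mono exp_sq_bound) simp
  finally have e2: "exp ((s-x)^2 - (Y-y)^2) \<le> exp (r^2 + pi^2/4 + pi*\<bar>y\<bar>) * exp (-pi*\<bar>Y\<bar>)"
    by (simp add: exp_add mult_ac)
  have "norm (F (Complex s Y) * exp ((Complex s Y - Complex x y)^2) / (Complex s Y - Complex x y))
      = norm (F (Complex s Y)) * exp ((s-x)^2 - (Y-y)^2) / norm (Complex (s-x) (Y-y))"
    by (simp add: d norm_mult norm_divide norm_exp_sq re_sq)
  also have "\<dots> \<le> norm (F (Complex s Y)) * exp ((s-x)^2 - (Y-y)^2)"
  proof -
    have "norm (F (Complex s Y)) * exp ((s-x)^2 - (Y-y)^2) / norm (Complex (s-x) (Y-y))
        \<le> norm (F (Complex s Y)) * exp ((s-x)^2 - (Y-y)^2) / 1"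
      using n1 by (intro divide_left_mono) auto
    thus ?thesis by simp
  qed
  also have "\<dots> \<le> norm (F (Complex s Y)) * (exp (r^2 + pi^2/4 + pi*\<bar>y\<bar>) * exp (-pi*\<bar>Y\<bar>))"
    by (intro mult_left_mono e2) simp
  finally show ?thesis by (simp add: mult_ac)
qed

lemma vbound:
  fixes F :: "complex \<Rightarrow> complex"
  assumes "\<bar>p - x\<bar> = r" "r > 0"
  shows "norm (F (Complex p s) * exp ((Complex p s - Complex x y)^2) / (Complex p s - Complex x y))
     \<le> exp (r^2 + pi^2/4 + pi*\<bar>y\<bar>) / r * (norm (F (Complex p s)) * exp (-pi*\<bar>s\<bar>))"
proof -
  have d: "Complex p s - Complex x y = Complex (p-x) (s-y)" by (simp add: complex_eq_iff)
  have n1: "norm (Complex (p-x) (s-y)) \<ge> r"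
    using abs_Re_le_cmod[of "Complex (p-x) (s-y)"] assms by simp
  have "(p-x)^2 = r^2" using assms by (metis power2_abs)
  hence e1: "exp ((p-x)^2 - (s-y)^2) = exp (r^2) * exp (-((s-y)^2))"
    by (simp add: exp_add[symmetric])
  also have "\<dots> \<le> exp (r^2) * (exp (pi^2/4 + pi*\<bar>y\<bar>) * exp (- pi * \<bar>s\<bar>))"
    by (intro mult_left_mono exp_sq_bound) simp
  finally have e2: "exp ((p-x)^2 - (s-y)^2) \<le> exp (r^2 + pi^2/4 + pi*\<bar>y\<bar>) * exp (-pi*\<bar>s\<bar>)"
    by (simp add: exp_add mult_ac)
  have "norm (F (Complex p s) * exp ((Complex p s - Complex x y)^2) / (Complex p s - Complex x y))
      = norm (F (Complex p s)) * exp ((p-x)^2 - (s-y)^2) / norm (Complex (p-x) (s-y))"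
    by (simp add: d norm_mult norm_divide norm_exp_sq re_sq)
  also have "\<dots> \<le> norm (F (Complex p s)) * exp ((p-x)^2 - (s-y)^2) / r"
  proof -
    have pos: "0 < norm (Complex (p-x) (s-y))" using n1 assms by linarith
    show ?thesis using n1 pos assms by (intro divide_left_mono) auto
  qed
  also have "\<dots> \<le> norm (F (Complex p s)) * (exp (r^2 + pi^2/4 + pi*\<bar>y\<bar>) * exp (-pi*\<bar>s\<bar>)) / r"
    using assms by (intro divide_right_mono mult_left_mono e2) auto
  finally show ?thesis by (simp add: mult_ac)
qed


lemma hside:
  fixes F :: "complex \<Rightarrow> complex"
  assumes contF: "continuous_on {w. 0 < Re w} F" and xr: "x - r > 0" "r > 0"
    and YT: "\<bar>Y - y\<bar> = T" "T \<ge> 1"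
    and J: "((\<lambda>s. F (Complex s Y) * exp ((Complex s Y - Complex x y)^2) / (Complex s Y - Complex x y))
              has_integral J) {x-r..x+r}"
  shows "ennreal (norm J) \<le> ennreal (exp (r^2 + pi^2/4 + pi*\<bar>y\<bar>)) *
     (ennreal (exp (- pi * \<bar>Y\<bar>)) * (\<integral>\<^sup>+ s \<in> {x-r..x+r}. ennreal (norm (F (Complex s Y))) \<partial>lborel))"
proof -
  define E where "E = exp (r^2 + pi^2/4 + pi*\<bar>y\<bar>)"
  have cc: "continuous_on {x-r..x+r} (\<lambda>s. F (Complex s Y))"
    by (rule continuous_on_compose2[OF contF]) (use xr in \<open>auto intro!: continuous_intros\<close>)
  have ne: "Complex s Y - Complex x y \<noteq> 0" for s
    using YT by (auto simp: complex_eq_iff)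
  have cont: "continuous_on {x-r..x+r}
      (\<lambda>s. F (Complex s Y) * exp ((Complex s Y - Complex x y)^2) / (Complex s Y - Complex x y))"
    using ne by (intro continuous_intros cc) auto
  have meas0: "(\<lambda>s. indicator {x-r..x+r} s *\<^sub>R norm (F (Complex s Y))) \<in> borel_measurable borel"
    by (rule borel_measurable_continuous_on_indicator) (auto intro!: continuous_intros cc)
  have meas: "(\<lambda>s. ennreal (norm (F (Complex s Y))) * indicator {x-r..x+r} s) \<in> borel_measurable lborel"
  proof -
    have m1: "(\<lambda>s. ennreal (indicator {x-r..x+r} s *\<^sub>R norm (F (Complex s Y)))) \<in> borel_measurable borel"
      using meas0 by measurable
    have eq: "(\<lambda>s. ennreal (indicator {x-r..x+r} s *\<^sub>R norm (F (Complex s Y)))) =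
        (\<lambda>s. ennreal (norm (F (Complex s Y))) * indicator {x-r..x+r} s)"
      by (auto split: split_indicator)
    show ?thesis using m1 unfolding eq by simp
  qed
  have "ennreal (norm J) \<le> (\<integral>\<^sup>+ s\<in>{x-r..x+r}. ennreal (norm
      (F (Complex s Y) * exp ((Complex s Y - Complex x y)^2) / (Complex s Y - Complex x y))) \<partial>lborel)"
    by (rule norm_le_nn_integral[OF J cont])
  also have "\<dots> \<le> (\<integral>\<^sup>+ s. ennreal (E * exp (- pi * \<bar>Y\<bar>)) *
        (ennreal (norm (F (Complex s Y))) * indicator {x-r..x+r} s) \<partial>lborel)"
  proof (intro nn_integral_mono)
    fix s
    show "ennreal (norm (F (Complex s Y) * exp ((Complex s Y - Complex x y)^2) / (Complex s Y - Complex x y)))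
          * indicator {x-r..x+r} s \<le> ennreal (E * exp (- pi * \<bar>Y\<bar>)) *
        (ennreal (norm (F (Complex s Y))) * indicator {x-r..x+r} s)"
    proof (cases "s \<in> {x-r..x+r}")
      case True
      hence "\<bar>s - x\<bar> \<le> r" by auto
      from hbound[OF this YT, of F] have
        "ennreal (norm (F (Complex s Y) * exp ((Complex s Y - Complex x y)^2) / (Complex s Y - Complex x y)))
          \<le> ennreal (E * exp (- pi * \<bar>Y\<bar>) * norm (F (Complex s Y)))"
        unfolding E_def by (rule ennreal_leI)
      then show ?thesis using True by (simp add: ennreal_mult E_def)
    qed simp
  qed
  also have "\<dots> = ennreal (E * exp (- pi * \<bar>Y\<bar>)) *
      (\<integral>\<^sup>+ s \<in> {x-r..x+r}. ennreal (norm (F (Complex s Y))) \<partial>lborel)"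
    by (rule nn_integral_cmult[OF meas])
  finally show ?thesis by (simp add: E_def ennreal_mult mult.assoc)
qed

lemma vside:
  fixes F :: "complex \<Rightarrow> complex"
  assumes contF: "continuous_on {w. 0 < Re w} F" and pr: "\<bar>p - x\<bar> = r" "r > 0" "p > 0"
    and J: "((\<lambda>s. F (Complex p s) * exp ((Complex p s - Complex x y)^2) / (Complex p s - Complex x y))
              has_integral J) {a..b}"
  shows "ennreal (norm J) \<le> ennreal (exp (r^2 + pi^2/4 + pi*\<bar>y\<bar>) / r) *
     (\<integral>\<^sup>+ s. ennreal (norm (F (Complex p s)) * exp (- pi * \<bar>s\<bar>)) \<partial>lborel)"
proof -
  define E where "E = exp (r^2 + pi^2/4 + pi*\<bar>y\<bar>)"
  have cc: "continuous_on UNIV (\<lambda>s. F (Complex p s))"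
    by (rule continuous_on_compose2[OF contF]) (use pr in \<open>auto intro!: continuous_intros\<close>)
  have ne: "Complex p s - Complex x y \<noteq> 0" for s
    using pr by (auto simp: complex_eq_iff)
  have cont: "continuous_on {a..b}
      (\<lambda>s. F (Complex p s) * exp ((Complex p s - Complex x y)^2) / (Complex p s - Complex x y))"
    using ne by (intro continuous_intros continuous_on_subset[OF cc]) auto
  have meas0: "(\<lambda>s. norm (F (Complex p s)) * exp (- pi * \<bar>s\<bar>)) \<in> borel_measurable borel"
    by (rule borel_measurable_continuous_onI) (auto intro!: continuous_intros cc)
  have meas: "(\<lambda>s. ennreal (norm (F (Complex p s)) * exp (- pi * \<bar>s\<bar>))) \<in> borel_measurable lborel"
    using meas0 by simp
  have "ennreal (norm J) \<le> (\<integral>\<^sup>+ s\<in>{a..b}. ennreal (norm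
      (F (Complex p s) * exp ((Complex p s - Complex x y)^2) / (Complex p s - Complex x y))) \<partial>lborel)"
    by (rule norm_le_nn_integral[OF J cont])
  also have "\<dots> \<le> (\<integral>\<^sup>+ s. ennreal (E / r) *
        ennreal (norm (F (Complex p s)) * exp (- pi * \<bar>s\<bar>)) \<partial>lborel)"
  proof (intro nn_integral_mono)
    fix s
    from vbound[OF pr(1,2), of F s y] have
        "ennreal (norm (F (Complex p s) * exp ((Complex p s - Complex x y)^2) / (Complex p s - Complex x y)))
          \<le> ennreal (E / r * (norm (F (Complex p s)) * exp (- pi * \<bar>s\<bar>)))"
      unfolding E_def by (rule ennreal_leI)
    also have "\<dots> = ennreal (E / r) * ennreal (norm (F (Complex p s)) * exp (- pi * \<bar>s\<bar>))"
      by (rule ennreal_mult) (use pr in \<open>auto simp: E_def\<close>)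
    finally show "ennreal (norm (F (Complex p s) * exp ((Complex p s - Complex x y)^2) / (Complex p s - Complex x y)))
          * indicator {a..b} s \<le> ennreal (E / r) * ennreal (norm (F (Complex p s)) * exp (- pi * \<bar>s\<bar>))"
      by (auto split: split_indicator)
  qed
  also have "\<dots> = ennreal (E / r) * (\<integral>\<^sup>+ s. ennreal (norm (F (Complex p s)) * exp (- pi * \<bar>s\<bar>)) \<partial>lborel)"
    by (rule nn_integral_cmult[OF meas])
  finally show ?thesis by (simp add: E_def)
qed


lemma key:
  fixes F :: "complex \<Rightarrow> complex"
  assumes holF: "F holomorphic_on {w. 0 < Re w}" and r: "r > 0" "x - r > 0" and T: "T \<ge> 1"
  shows "ennreal (2*pi*norm (F (Complex x y))) \<le>
     ennreal (exp (r^2 + pi^2/4 + pi*\<bar>y\<bar>) / r) *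
       ((\<integral>\<^sup>+ s. ennreal (norm (F (Complex (x+r) s)) * exp (- pi * \<bar>s\<bar>)) \<partial>lborel) +
        (\<integral>\<^sup>+ s. ennreal (norm (F (Complex (x-r) s)) * exp (- pi * \<bar>s\<bar>)) \<partial>lborel))
   + ennreal (exp (r^2 + pi^2/4 + pi*\<bar>y\<bar>)) *
       (ennreal (exp (- pi * \<bar>y-T\<bar>)) * (\<integral>\<^sup>+ s \<in> {x-r..x+r}. ennreal (norm (F (Complex s (y-T)))) \<partial>lborel) +
        ennreal (exp (- pi * \<bar>y+T\<bar>)) * (\<integral>\<^sup>+ s \<in> {x-r..x+r}. ennreal (norm (F (Complex s (y+T)))) \<partial>lborel))"
proof -
  define z where "z = Complex x y"
  define S where "S = {w. 0 < Re w}"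
  define g where "g = (\<lambda>w. F w * exp ((w - z)^2))"
  define h where "h = (\<lambda>w. g w / (w - z))"
  define a1 where "a1 = Complex (x-r) (y-T)"
  define a2 where "a2 = Complex (x+r) (y-T)"
  define a3 where "a3 = Complex (x+r) (y+T)"
  define a4 where "a4 = Complex (x-r) (y+T)"
  have contF: "continuous_on {w. 0 < Re w} F" using holF holomorphic_on_imp_continuous_on by blast
  have holg: "g holomorphic_on S" unfolding g_def S_def using holF by (intro holomorphic_intros) auto
  have conth: "continuous_on (S - {z}) h" unfolding h_def g_def S_def
    by (intro continuous_intros continuous_on_subset[OF contF]) auto
  have zbox: "z \<in> box a1 a3" using r T by (simp add: in_box_complex_iff z_def a1_def a3_def)
  have pim: "path_image (rectpath a1 a3) \<subseteq> S - {z}"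
  proof -
    have "path_image (rectpath a1 a3) = cbox a1 a3 - box a1 a3"
      using r T by (intro path_image_rectpath_cbox_minus_box) (auto simp: a1_def a3_def)
    moreover have "cbox a1 a3 \<subseteq> S" using r by (auto simp: in_cbox_complex_iff S_def a1_def a3_def)
    ultimately show ?thesis using zbox by auto
  qed
  have pim2: "path_image (rectpath a1 a3) = closed_segment a1 a2 \<union> (closed_segment a2 a3 \<union>
       (closed_segment a3 a4 \<union> closed_segment a4 a1))"
    by (simp add: rectpath_def Let_def path_image_join a1_def a2_def a3_def a4_def)
  have "interior S = S" unfolding S_def by (intro interior_open open_halfspace_Re_gt)
  hence zS: "z \<in> interior S" using zbox pim r by (auto simp: S_def z_def)
  have "(h has_contour_integral (2*pi*\<i> * winding_number (rectpath a1 a3) z * g z)) (rectpath a1 a3)"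
    unfolding h_def
    by (rule Cauchy_integral_formula_convex_simple[OF _ holg zS valid_path_rectpath pim])
       (auto simp: S_def convex_halfspace_Re_gt)
  hence cauchy: "(h has_contour_integral (2*pi*\<i> * F z)) (rectpath a1 a3)"
    using winding_number_rectpath[OF zbox] by (simp add: g_def)
  have seg: "continuous_on (closed_segment a1 a2) h" "continuous_on (closed_segment a2 a3) h"
    "continuous_on (closed_segment a3 a4) h" "continuous_on (closed_segment a4 a1) h"
    using pim pim2 by (auto intro: continuous_on_subset[OF conth])
  obtain I1 I2 I3 I4 where
    I1: "(h has_contour_integral I1) (linepath a1 a2)" and
    I2: "(h has_contour_integral I2) (linepath a2 a3)" and
    I3: "(h has_contour_integral I3) (linepath a3 a4)" and
    I4: "(h has_contour_integral I4) (linepath a4 a1)"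
    using seg[THEN contour_integrable_continuous_linepath] has_contour_integral_integral by blast
  have rp: "rectpath a1 a3 = linepath a1 a2 +++ linepath a2 a3 +++ linepath a3 a4 +++ linepath a4 a1"
    by (simp add: rectpath_def Let_def a1_def a2_def a3_def a4_def)
  have "(h has_contour_integral (I1 + (I2 + (I3 + I4)))) (rectpath a1 a3)"
    unfolding rp
    by (intro has_contour_integral_join I1 I2 I3 I4 valid_path_join valid_path_linepath) auto
  hence sum: "2*pi*\<i> * F z = I1 + (I2 + (I3 + I4))" using cauchy has_contour_integral_unique by blast
  have "2*pi*norm (F z) = norm (2*pi*\<i> * F z)" by (simp add: norm_mult)
  also have "\<dots> \<le> norm I1 + norm I2 + norm I3 + norm I4" unfolding sum
    by (smt (verit) norm_triangle_ineq)
  finally have tri: "ennreal (2*pi*norm (F z)) \<le> ennreal (norm I1) + ennreal (norm I2) + ennreal (norm I3) + ennreal (norm I4)"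
    by (simp add: ennreal_plus[symmetric] del: ennreal_plus)
  define E where "E = exp (r^2 + pi^2/4 + pi*\<bar>y\<bar>)"
  have hC: "h (Complex u v) = F (Complex u v) * exp ((Complex u v - Complex x y)^2) / (Complex u v - Complex x y)" for u v
    by (simp add: h_def g_def z_def)
  have "((\<lambda>s. h (Complex s (y-T))) has_integral I1) {x-r..x+r}"
    using I1 has_contour_integral_linepath_same_Im_iff[of a1 "y-T" a2 "x-r" "x+r" h I1] r
    by (simp add: a1_def a2_def)
  hence B1: "ennreal (norm I1) \<le> ennreal E * (ennreal (exp (- pi * \<bar>y-T\<bar>)) *
      (\<integral>\<^sup>+ s \<in> {x-r..x+r}. ennreal (norm (F (Complex s (y-T)))) \<partial>lborel))"
    unfolding hC E_def using T by (intro hside[OF contF r(2) r(1)]) auto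
  have "(h has_contour_integral (-I3)) (linepath a4 a3)" using I3 by (rule has_contour_integral_reverse_linepath)
  hence "((\<lambda>s. h (Complex s (y+T))) has_integral (-I3)) {x-r..x+r}"
    using has_contour_integral_linepath_same_Im_iff[of a4 "y+T" a3 "x-r" "x+r" h "-I3"] r
    by (simp add: a3_def a4_def)
  hence "ennreal (norm (-I3)) \<le> ennreal E * (ennreal (exp (- pi * \<bar>y+T\<bar>)) *
      (\<integral>\<^sup>+ s \<in> {x-r..x+r}. ennreal (norm (F (Complex s (y+T)))) \<partial>lborel))"
    unfolding hC E_def using T by (intro hside[OF contF r(2) r(1)]) auto
  hence B3: "ennreal (norm I3) \<le> ennreal E * (ennreal (exp (- pi * \<bar>y+T\<bar>)) *
      (\<integral>\<^sup>+ s \<in> {x-r..x+r}. ennreal (norm (F (Complex s (y+T)))) \<partial>lborel))" by simp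
  have "((\<lambda>s. h (Complex (x+r) s)) has_integral (-\<i>*I2)) {y-T..y+T}"
    using I2 has_contour_integral_linepath_same_Re_iff[of a2 "x+r" a3 "y-T" "y+T" h I2] T
    by (simp add: a2_def a3_def)
  hence "ennreal (norm (-\<i>*I2)) \<le> ennreal (E / r) *
      (\<integral>\<^sup>+ s. ennreal (norm (F (Complex (x+r) s)) * exp (- pi * \<bar>s\<bar>)) \<partial>lborel)"
    unfolding hC E_def using r by (intro vside[OF contF]) auto
  hence B2: "ennreal (norm I2) \<le> ennreal (E / r) *
      (\<integral>\<^sup>+ s. ennreal (norm (F (Complex (x+r) s)) * exp (- pi * \<bar>s\<bar>)) \<partial>lborel)"
    by (simp add: norm_mult)
  have "(h has_contour_integral (-I4)) (linepath a1 a4)" using I4 by (rule has_contour_integral_reverse_linepath)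
  hence "((\<lambda>s. h (Complex (x-r) s)) has_integral (-\<i>*(-I4))) {y-T..y+T}"
    using has_contour_integral_linepath_same_Re_iff[of a1 "x-r" a4 "y-T" "y+T" h "-I4"] T
    by (simp add: a1_def a4_def)
  hence "ennreal (norm (-\<i>*(-I4))) \<le> ennreal (E / r) *
      (\<integral>\<^sup>+ s. ennreal (norm (F (Complex (x-r) s)) * exp (- pi * \<bar>s\<bar>)) \<partial>lborel)"
    unfolding hC E_def using r by (intro vside[OF contF]) auto
  hence B4: "ennreal (norm I4) \<le> ennreal (E / r) *
      (\<integral>\<^sup>+ s. ennreal (norm (F (Complex (x-r) s)) * exp (- pi * \<bar>s\<bar>)) \<partial>lborel)"
    by (simp add: norm_mult)
  have "ennreal (2*pi*norm (F (Complex x y))) \<le> ennreal (norm I1) + ennreal (norm I2) + ennreal (norm I3) + ennreal (norm I4)"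
    using tri by (simp add: z_def)
  from order_trans[OF this add_mono[OF add_mono[OF add_mono[OF B1 B2] B3] B4]]
  show ?thesis unfolding E_def by (simp only: distrib_left add_ac)
qed

theorem lemma3p1:
  fixes \<Phi> :: "complex \<Rightarrow> complex" and \<delta> :: real
  assumes anal: "\<Phi> analytic_on {z. Re z > 0}"
    and a: "\<And>a b. 0 < a \<Longrightarrow> a < b \<Longrightarrow>
      ((\<lambda>y. ennreal (exp (- pi * \<bar>y\<bar>)) *
         (\<integral>\<^sup>+ x \<in> {a..b}. ennreal (norm (\<Phi> (Complex x y) / Complex x y)) \<partial>lborel))
        \<longlongrightarrow> 0) at_top
      \<and> ((\<lambda>y. ennreal (exp (- pi * \<bar>y\<bar>)) *
         (\<integral>\<^sup>+ x \<in> {a..b}. ennreal (norm (\<Phi> (Complex x y) / Complex x y)) \<partial>lborel))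
        \<longlongrightarrow> 0) at_bot"
    and b: "\<And>\<eta>. \<eta> > 0 \<Longrightarrow>
      (SUP x\<in>{\<eta>..}. \<integral>\<^sup>+ y. ennreal (norm (\<Phi> (Complex x y) / Complex x y) * exp (- pi * \<bar>y\<bar>)) \<partial>lborel) < \<infinity>"
    and c: "((\<lambda>x. \<integral>\<^sup>+ y. ennreal (norm (\<Phi> (Complex x y) / Complex x y) * exp (- pi * \<bar>y\<bar>)) \<partial>lborel)
        \<longlongrightarrow> 0) at_top"
    and \<delta>: "\<delta> > 0"
  shows "\<exists>C > 0. \<forall>z. Re z \<ge> \<delta> \<longrightarrow> norm (\<Phi> z) \<le> C * norm z * exp (pi * \<bar>Im z\<bar>)"
proof -
  define F where "F = (\<lambda>w. \<Phi> w / w)"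
  define r where "r = \<delta>/2"
  have r0: "r > 0" using \<delta> by (simp add: r_def)
  have holF: "F holomorphic_on {w. 0 < Re w}"
  proof -
    have "\<Phi> holomorphic_on {w. 0 < Re w}" using anal analytic_imp_holomorphic by blast
    thus ?thesis unfolding F_def by (intro holomorphic_intros) auto
  qed
  define N where "N = (\<lambda>x. \<integral>\<^sup>+ y. ennreal (norm (F (Complex x y)) * exp (- pi * \<bar>y\<bar>)) \<partial>lborel)"
  define Ms where "Ms = (SUP x\<in>{r..}. N x)"
  have "Ms < \<infinity>" using b[OF r0] by (simp add: Ms_def N_def F_def)
  define m where "m = enn2real Ms"
  have Msm: "Ms = ennreal m" using \<open>Ms < \<infinity>\<close> by (simp add: m_def)
  have m0: "m \<ge> 0" by (simp add: m_def)
  define C where "C = exp (r^2 + pi^2/4) * m / (pi * r) + 1"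
  have C0: "C > 0" unfolding C_def using m0 r0 by (intro add_nonneg_pos) auto
  have main: "norm (F z) \<le> exp (r^2 + pi^2/4) * m / (pi * r) * exp (pi * \<bar>Im z\<bar>)" if z: "Re z \<ge> \<delta>" for z
  proof -
    define x where "x = Re z"
    define y where "y = Im z"
    have zxy: "z = Complex x y" by (simp add: x_def y_def)
    have xr: "x - r > 0" "x - r \<ge> r" "x + r \<ge> r" using z r0 by (auto simp: x_def r_def)
    define E where "E = exp (r^2 + pi^2/4 + pi*\<bar>y\<bar>)"
    define A where "A = (\<lambda>Y. ennreal (exp (- pi * \<bar>Y\<bar>)) * (\<integral>\<^sup>+ s \<in> {x-r..x+r}. ennreal (norm (F (Complex s Y))) \<partial>lborel))"
    have NM: "N (x+r) \<le> Ms" "N (x-r) \<le> Ms" unfolding Ms_def using xr by (auto intro!: SUP_upper)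
    have bound: "ennreal (2*pi*norm (F z)) \<le> ennreal (E/r) * (Ms + Ms) + ennreal E * (A (y-T) + A (y+T))"
      if T: "T \<ge> 1" for T
    proof -
      have "ennreal (2*pi*norm (F z)) \<le> ennreal (E/r) * (N (x+r) + N (x-r)) + ennreal E * (A (y-T) + A (y+T))"
        unfolding zxy E_def N_def A_def by (rule key[OF holF r0 xr(1) T])
      also have "\<dots> \<le> ennreal (E/r) * (Ms + Ms) + ennreal E * (A (y-T) + A (y+T))"
        using NM by (intro add_mono mult_left_mono) auto
      finally show ?thesis .
    qed
    have aa: "((\<lambda>Y. A Y) \<longlongrightarrow> 0) at_top" "((\<lambda>Y. A Y) \<longlongrightarrow> 0) at_bot"
      using a[of "x-r" "x+r"] xr r0 by (auto simp: A_def F_def)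
    have f1: "filterlim (\<lambda>T. y + T) at_top (at_top :: real filter)"
      by (rule filterlim_tendsto_add_at_top[OF tendsto_const filterlim_ident])
    have f2: "filterlim (\<lambda>T. y - T) at_bot (at_top :: real filter)"
      unfolding filterlim_uminus_at_bot filterlim_at_top eventually_at_top_linorder
    proof (intro allI)
      fix Z :: real show "\<exists>N. \<forall>n\<ge>N. Z \<le> - (y - n)" by (rule exI[of _ "Z + y"]) auto
    qed
    have lim: "((\<lambda>T. ennreal (E/r) * (Ms + Ms) + ennreal E * (A (y-T) + A (y+T))) \<longlongrightarrow>
        ennreal (E/r) * (Ms + Ms) + ennreal E * (0 + 0)) at_top"
      by (intro tendsto_intros ennreal_tendsto_cmult filterlim_compose[OF aa(1) f1]
           filterlim_compose[OF aa(2) f2]) auto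
    have "ennreal (2*pi*norm (F z)) \<le> ennreal (E/r) * (Ms + Ms) + ennreal E * (0 + 0)"
      by (rule tendsto_le[OF _ lim tendsto_const])
         (auto simp: eventually_at_top_linorder intro!: exI[of _ 1] bound)
    also have "\<dots> = ennreal (E/r) * ennreal (2*m)"
    proof -
      have "Ms + Ms = ennreal (2*m)" using m0 unfolding Msm by (metis ennreal_plus mult_2)
      thus ?thesis by (simp only: mult_zero_right add_0_right)
    qed
    also have "\<dots> = ennreal (E/r * (2*m))" using r0 m0 by (intro ennreal_mult[symmetric]) (auto simp: E_def)
    finally have "2*pi*norm (F z) \<le> E/r * (2*m)" using r0 m0 by (subst (asm) ennreal_le_iff) (auto simp: E_def)
    hence "2*pi*norm (F z) * r \<le> E/r * (2*m) * r" using r0 by (intro mult_right_mono) auto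
    also have "E/r * (2*m) * r = 2 * (E * m)" using r0 by simp
    finally have "norm (F z) * (pi * r) \<le> E * m" by (simp add: mult_ac)
    hence "norm (F z) \<le> E * m / (pi * r)" using r0 by (subst pos_le_divide_eq) auto
    also have "E * m / (pi * r) = exp (r^2 + pi^2/4) * m / (pi * r) * exp (pi * \<bar>Im z\<bar>)"
      by (simp add: E_def y_def exp_add mult_ac)
    finally show ?thesis .
  qed
  show ?thesis
  proof (intro exI[of _ C] conjI allI impI C0)
    fix z :: complex assume z: "Re z \<ge> \<delta>"
    hence "z \<noteq> 0" using \<delta> by auto
    hence "norm (\<Phi> z) = norm z * norm (F z)" by (simp add: F_def norm_divide)
    also have "\<dots> \<le> norm z * (exp (r^2 + pi^2/4) * m / (pi * r) * exp (pi * \<bar>Im z\<bar>))"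
      by (intro mult_left_mono main z) auto
    also have "\<dots> \<le> norm z * (C * exp (pi * \<bar>Im z\<bar>))"
      by (intro mult_left_mono mult_right_mono) (auto simp: C_def)
    finally show "norm (\<Phi> z) \<le> C * norm z * exp (pi * \<bar>Im z\<bar>)" by (simp add: mult_ac)
  qed
qed
end
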